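(* Let $(a_n)_{n\ge1}$ be real with $|a_n|\le1$, $\gamma_n=\operatorname{sign}(a_n)$, and let $N_1<N_2<\cdots$ be integers with $\lim_{j\to\infty}\frac1{N_j}\sum_{n=1}^{N_j}|a_n|=\theta>0$. For each sufficiently large $j$ let $m=m(j)$ be the unique index with $q_{m+1}/3\le N_j<q_{m+2}/3$, and put $q=q_{m}$, $M=\lfloor N_j/q\rfloor$, $M'=\lfloor qM/(q-1)\rfloor$. Then for all sufficiently large $j$, either there is $c\in\{0,\dots,q-1\}$ with $$A^{q,M}_{c,c}\ge\frac{\theta}{8q},$$ or there is $d\in\{0,\dots,q-2\}$ with $$-A^{q-1,M'}_{d+1,d}\ge\frac{\theta}{8q}.$$
   Context: Fix integers $2\le q_1<q_2<\cdots$ such that $q_{k+1}>q_k^4+3q_k$ for every $k\ge1$. (In the paper's notation, $q=q^{(i')}_{k'}$ where $q^{(0)}_k=q_{2k}$, $q^{(1)}_k=q_{2k+1}$, and $q-1=q^{(i'+2)}_{k'}$.) For integers $q,M\ge1$ and $r,c\ge0$ set $$A^{q,M}_{r,c}=\frac1{qM}\sum_{b=r}^{q-1+r}\sum_{n=1}^M\gamma(qn+c)\,a(qn+b).$$ *)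

theory Defs
  imports "HOL-Analysis.Analysis"
begin

definition gam :: "(nat \<Rightarrow> real) \<Rightarrow> nat \<Rightarrow> real" where
  "gam a n = sgn (a n)"

definition A :: "(nat \<Rightarrow> real) \<Rightarrow> nat \<Rightarrow> nat \<Rightarrow> nat \<Rightarrow> nat \<Rightarrow> real" where
  "A a q M r c = (1 / (real q * real M)) *
     (\<Sum>b = r..q - 1 + r. \<Sum>n = 1..M. gam a (q * n + c) * a (q * n + b))"

end

theory Submission
  imports Defs
begin

lemma shift_blk: "(\<Sum>c<P. h (k + c)) = (\<Sum>x\<in>{k..<k+P}. (h::nat\<Rightarrow>real) x)"
proof -
  have "(\<Sum>x\<in>{0+k..<P+k}. h x) = (\<Sum>i\<in>{0..<P}. h (i + k))" by (rule sum.shift_bounds_nat_ivl)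
  thus ?thesis by (simp add: atLeast0LessThan add.commute)
qed

lemma block: "(\<Sum>n=1..M. \<Sum>c<P. h (P*n+c)) = (\<Sum>x\<in>{P..<P*M+P}. (h::nat\<Rightarrow>real) x)"
proof (induction M)
  case 0 then show ?case by simp
next
  case (Suc M)
  have "(\<Sum>n=1..Suc M. \<Sum>c<P. h (P*n+c)) = (\<Sum>x\<in>{P..<P*M+P}. h x) + (\<Sum>c<P. h (P*Suc M+c))"
    using Suc by simp
  also have "(\<Sum>c<P. h (P*Suc M+c)) = (\<Sum>x\<in>{P*M+P..<P*M+P+P}. h x)"
    using shift_blk[of h "P*Suc M" P] by (simp add: add.commute)
  also have "(\<Sum>x\<in>{P..<P*M+P}. h x) + \<dots> = (\<Sum>x\<in>{P..<P*M+P+P}. h x)"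
    by (rule sum.atLeastLessThan_concat) auto
  finally show ?case by (simp add: add.commute add.left_commute)
qed

lemma inner: "P \<ge> 1 \<Longrightarrow> (\<Sum>b=r..P-1+r. f b) = (\<Sum>k<P. (f::nat\<Rightarrow>real) (r+k))"
proof -
  assume "P \<ge> 1"
  hence "{r..P-1+r} = {r..<r+P}" by auto
  thus ?thesis using shift_blk[of f r P] by simp
qed

lemma L1:
  assumes "P \<ge> 1"
  shows "(\<Sum>c\<in>{0..P-1}. \<Sum>b=c+s..P-1+(c+s). \<Sum>n=1..M. g(P*n+c) * a(P*n+b))
       = (\<Sum>x\<in>{P..<P*M+P}. g x * (\<Sum>k<P. (a::nat\<Rightarrow>real) (x+s+k)))"
proof -
  have "(\<Sum>c\<in>{0..P-1}. \<Sum>b=c+s..P-1+(c+s). \<Sum>n=1..M. g(P*n+c) * a(P*n+b))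
      = (\<Sum>c<P. \<Sum>k<P. \<Sum>n=1..M. g(P*n+c) * a(P*n+(c+s+k)))"
  proof -
    have e: "{0..P-1} = {..<P}" using assms by auto
    show ?thesis unfolding e
      by (rule sum.cong[OF refl], subst inner[OF assms]) (simp add: sum_distrib_left)
  qed
  also have "\<dots> = (\<Sum>n=1..M. \<Sum>c<P. g(P*n+c) * (\<Sum>k<P. a(P*n+c+s+k)))"
  proof -
    have "(\<Sum>c<P. \<Sum>k<P. \<Sum>n=1..M. g(P*n+c) * a(P*n+(c+s+k)))
        = (\<Sum>c<P. \<Sum>n=1..M. \<Sum>k<P. g(P*n+c) * a(P*n+(c+s+k)))"
      by (rule sum.cong[OF refl], rule sum.swap)
    also have "\<dots> = (\<Sum>n=1..M. \<Sum>c<P. \<Sum>k<P. g(P*n+c) * a(P*n+(c+s+k)))"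
      by (rule sum.swap)
    also have "\<dots> = (\<Sum>n=1..M. \<Sum>c<P. g(P*n+c) * (\<Sum>k<P. a(P*n+c+s+k)))"
      by (simp only: sum_distrib_left add.assoc)
    finally show ?thesis .
  qed
  also have "\<dots> = (\<Sum>x\<in>{P..<P*M+P}. g x * (\<Sum>k<P. a (x+s+k)))"
    by (rule block[where h="\<lambda>x. g x * (\<Sum>k<P. a (x+s+k))"])
  finally show ?thesis .
qed

lemma qge2: assumes "2 \<le> q 1" "\<forall>k\<ge>1. q k < q (k + 1)" shows "m \<ge> 1 \<Longrightarrow> 2 \<le> (q::nat\<Rightarrow>nat) m"
proof (induction m)
  case 0 then show ?case by simp
next
  case (Suc m)
  show ?case
  proof (cases "m = 0")
    case True then show ?thesis using assms by simp
  next
    case False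
    then have "2 \<le> q m" using Suc by simp
    moreover have "q m < q (m+1)" using assms False by simp
    ultimately show ?thesis by simp
  qed
qed

lemma core:
  fixes a :: "nat \<Rightarrow> real" and Q N :: nat and \<theta> :: real
  assumes Q2: "2 \<le> Q" and QN: "real Q ^ 4 + 3 * real Q < 3 * real N"
    and abound: "\<forall>n\<ge>1. \<bar>a n\<bar> \<le> 1"
    and thpos: "\<theta> > 0"
    and Sbig: "(\<Sum>n = 1..N. \<bar>a n\<bar>) / real N > \<theta> / 2"
    and Nbig: "real N \<ge> 432 / \<theta>^2"
  shows "(let M = N div Q; M' = (Q * M) div (Q - 1) in
             (\<exists>c\<in>{0..Q - 1}. A a Q M c c \<ge> \<theta> / (8 * real Q)) \<or>
             (\<exists>d\<in>{0..Q - 2}. - A a (Q - 1) M' (d + 1) d \<ge> \<theta> / (8 * real Q)))"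
proof (rule ccontr)
  define M where "M = N div Q"
  define P where "P = Q - 1"
  define M' where "M' = (Q * M) div P"
  define g where "g = gam a"
  define F where "F x = g x * (\<Sum>k<P. a (x+1+k))" for x
  define S where "S = (\<Sum>n = 1..N. \<bar>a n\<bar>)"
  assume "\<not> ?thesis"
  hence H1: "\<forall>c\<in>{0..Q-1}. A a Q M c c < \<theta> / (8 * real Q)"
    and H2: "\<forall>d\<in>{0..P-1}. - A a P M' (d + 1) d < \<theta> / (8 * real Q)"
    unfolding M_def M'_def P_def Let_def by (auto simp: not_le)
  have QP: "Q = Suc P" "P \<ge> 1" using Q2 unfolding P_def by auto
  have "real Q < real N" using QN Q2 by (smt (verit) of_nat_0_le_iff zero_le_power)
  hence "Q < N" by simp
  have e1: "Q*M + N mod Q = N" "N mod Q < Q" unfolding M_def using Q2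
    by (simp_all add: mult_div_mod_eq)
  hence NM: "N < Q*M + Q" "Q * M \<le> N" by linarith+
  have M1: "M \<ge> 1" using NM \<open>Q < N\<close> by (cases M) auto
  have e2: "P*M' + (Q*M) mod P = Q*M" "(Q*M) mod P < P" unfolding M'_def
    by (rule mult_div_mod_eq, rule mod_less_divisor) (use QP in simp)
  hence PM: "P*M' \<le> Q*M" "Q*M < P*M' + P" by linarith+
  have M'1: "M' \<ge> 1" using PM QP M1 by (metis le_add2 less_le_trans mult_le_cancel1 nat_mult_le_cancel_disj not_less_eq_eq Suc_le_eq QP(1) add.commute mult.commute mult_Suc_right) 
  have gabs: "g x * a x = \<bar>a x\<bar>" for x unfolding g_def gam_def by (simp add: sgn_mult_self_eq abs_mult_sgn sgn_if abs_if)
  have gle: "\<bar>g x\<bar> \<le> 1" for x unfolding g_def gam_def by (simp add: abs_sgn_eq)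
  have Fb: "\<bar>F x\<bar> \<le> real P" if "x \<ge> 1" for x
  proof -
    have "\<bar>\<Sum>k<P. a (x+1+k)\<bar> \<le> (\<Sum>k<P. \<bar>a (x+1+k)\<bar>)" by (rule sum_abs)
    also have "\<dots> \<le> (\<Sum>k<P. 1)" by (rule sum_mono) (use abound in auto)
    finally have "\<bar>\<Sum>k<P. a (x+1+k)\<bar> \<le> real P" by simp
    thus ?thesis unfolding F_def abs_mult using gle[of x]
      by (smt (verit) abs_ge_zero mult_le_one mult_right_mono mult_left_le_one_le)
  qed
  define T1 where "T1 = (\<Sum>c\<in>{0..Q-1}. A a Q M c c)"
  define T2 where "T2 = (\<Sum>d\<in>{0..P-1}. A a P M' (d + 1) d)"
  have QMpos: "real Q * real M > 0" using M1 Q2 by simp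
  have PMpos: "real P * real M' > 0" using M'1 QP by simp
  have K1: "real Q * real M * T1 = (\<Sum>x\<in>{Q..<Q*M+Q}. \<bar>a x\<bar>) + (\<Sum>x\<in>{Q..<Q*M+Q}. F x)"
  proof -
    have "real Q * real M * T1 = (\<Sum>c\<in>{0..Q-1}. \<Sum>b=c+0..Q-1+(c+0). \<Sum>n=1..M. g(Q*n+c) * a(Q*n+b))"
    proof -
      have "T1 = 1/(real Q * real M) * (\<Sum>c\<in>{0..Q-1}. \<Sum>b=c+0..Q-1+(c+0). \<Sum>n=1..M. g(Q*n+c) * a(Q*n+b))"
        unfolding T1_def A_def g_def by (simp add: sum_distrib_left)
      thus ?thesis using QMpos Q2 by simp
    qed
    also have "\<dots> = (\<Sum>x\<in>{Q..<Q*M+Q}. g x * (\<Sum>k<Q. a (x+0+k)))"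
      by (rule L1) (use Q2 in simp)
    also have "\<dots> = (\<Sum>x\<in>{Q..<Q*M+Q}. \<bar>a x\<bar> + F x)"
    proof (rule sum.cong[OF refl])
      fix x
      have "(\<Sum>k<Q. a (x+0+k)) = a (x+0+0) + (\<Sum>k<P. a (x+0+Suc k))"
        unfolding QP(1) by (rule sum.lessThan_Suc_shift)
      thus "g x * (\<Sum>k<Q. a (x+0+k)) = \<bar>a x\<bar> + F x"
        by (simp add: F_def distrib_left gabs)
    qed
    finally show ?thesis by (simp add: sum.distrib)
  qed
  have K2: "real P * real M' * T2 = (\<Sum>x\<in>{P..<P*M'+P}. F x)"
  proof -
    have "real P * real M' * T2 = (\<Sum>c\<in>{0..P-1}. \<Sum>b=c+1..P-1+(c+1). \<Sum>n=1..M'. g(P*n+c) * a(P*n+b))"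
    proof -
      have "T2 = 1/(real P * real M') * (\<Sum>c\<in>{0..P-1}. \<Sum>b=c+1..P-1+(c+1). \<Sum>n=1..M'. g(P*n+c) * a(P*n+b))"
        unfolding T2_def A_def g_def by (simp add: sum_distrib_left)
      thus ?thesis using PMpos QP by simp
    qed
    also have "\<dots> = (\<Sum>x\<in>{P..<P*M'+P}. g x * (\<Sum>k<P. a (x+1+k)))"
      by (rule L1) (use QP in simp)
    finally show ?thesis unfolding F_def .
  qed
  have B1: "(\<Sum>x\<in>{Q..<Q*M+Q}. \<bar>a x\<bar>) \<ge> S - real P"
  proof -
    have "S \<le> (\<Sum>x\<in>{1..<Q*M+Q}. \<bar>a x\<bar>)" unfolding S_def
      by (rule sum_mono2) (use NM in auto)
    also have "\<dots> = (\<Sum>x\<in>{1..<Q}. \<bar>a x\<bar>) + (\<Sum>x\<in>{Q..<Q*M+Q}. \<bar>a x\<bar>)"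
      by (rule sum.atLeastLessThan_concat[symmetric]) (use Q2 in auto)
    also have "(\<Sum>x\<in>{1..<Q}. \<bar>a x\<bar>) \<le> (\<Sum>x\<in>{1..<Q}. 1)"
      by (rule sum_mono) (use abound in auto)
    also have "(\<Sum>x\<in>{1..<Q}. (1::real)) = real P" using QP by simp
    finally show ?thesis by simp
  qed
  have B2: "(\<Sum>x\<in>{Q..<Q*M+Q}. F x) - (\<Sum>x\<in>{P..<P*M'+P}. F x) \<ge> - (real P * real P + real P)"
  proof -
    have s2: "(\<Sum>x\<in>{P..<P*M'+P}. F x) = (\<Sum>x\<in>{P..<Q}. F x) + (\<Sum>x\<in>{Q..<P*M'+P}. F x)"
      by (rule sum.atLeastLessThan_concat[symmetric]) (use QP M'1 in auto)
    have s1: "(\<Sum>x\<in>{Q..<Q*M+Q}. F x) = (\<Sum>x\<in>{Q..<P*M'+P}. F x) + (\<Sum>x\<in>{P*M'+P..<Q*M+Q}. F x)"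
      by (rule sum.atLeastLessThan_concat[symmetric]) (use QP M'1 PM in auto)
    have "{P..<Q} = {P}" using QP by auto
    hence a1: "\<bar>\<Sum>x\<in>{P..<Q}. F x\<bar> \<le> real P" using Fb[of P] QP by simp
    have "\<bar>\<Sum>x\<in>{P*M'+P..<Q*M+Q}. F x\<bar> \<le> (\<Sum>x\<in>{P*M'+P..<Q*M+Q}. \<bar>F x\<bar>)" by (rule sum_abs)
    also have "\<dots> \<le> (\<Sum>x\<in>{P*M'+P..<Q*M+Q}. real P)" by (rule sum_mono) (use Fb QP in auto)
    also have "\<dots> = real (Q*M+Q - (P*M'+P)) * real P" by simp
    also have "\<dots> \<le> real P * real P"
    proof -
      have "Q*M+Q - (P*M'+P) \<le> P" using PM QP by linarith
      hence "real (Q*M+Q - (P*M'+P)) \<le> real P" by linarith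
      thus ?thesis by (simp add: mult_right_mono)
    qed
    finally have a2: "\<bar>\<Sum>x\<in>{P*M'+P..<Q*M+Q}. F x\<bar> \<le> real P * real P" .
    show ?thesis unfolding s1 s2 using a1 a2 by linarith
  qed
  have U1: "T1 \<le> \<theta> / 8"
  proof -
    have "T1 \<le> (\<Sum>c\<in>{0..Q-1}. \<theta> / (8 * real Q))" unfolding T1_def
      by (rule sum_mono) (use H1 in force)
    also have "\<dots> = \<theta> / 8" using Q2 by simp
    finally show ?thesis .
  qed
  have U2: "- T2 \<le> real P * (\<theta> / (8 * real Q))"
  proof -
    have "- T2 = (\<Sum>d\<in>{0..P-1}. - A a P M' (d + 1) d)" unfolding T2_def by (simp add: sum_negf)
    also have "\<dots> \<le> (\<Sum>d\<in>{0..P-1}. \<theta> / (8 * real Q))"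
      by (rule sum_mono) (use H2 in force)
    also have "\<dots> = real P * (\<theta> / (8 * real Q))" using QP by simp
    finally show ?thesis .
  qed
  have QMN: "real Q * real M \<le> real N" using NM by (metis of_nat_le_iff of_nat_mult)
  have PMQ: "real P * real M' \<le> real Q * real M" using PM by (metis of_nat_le_iff of_nat_mult)
  have V1: "real Q * real M * T1 \<le> real N * \<theta> / 8"
  proof -
    have "real Q * real M * T1 \<le> real Q * real M * (\<theta>/8)" using U1 QMpos by (intro mult_left_mono) auto
    also have "\<dots> \<le> real N * (\<theta>/8)" using QMN thpos by (intro mult_right_mono) auto
    finally show ?thesis by simp
  qed
  have V2: "real P * real M' * (- T2) \<le> real N * \<theta> / 8"
  proof -
    have "real P * real M' * (- T2) \<le> real P * real M' * (real P * (\<theta> / (8 * real Q)))"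
      using U2 PMpos by (intro mult_left_mono) auto
    also have "\<dots> \<le> real Q * real M * (real Q * (\<theta> / (8 * real Q)))"
      by (rule mult_mono) (use PMQ QP thpos PMpos in \<open>auto intro!: divide_right_mono mult_right_mono\<close>)
    also have "\<dots> = real Q * real M * (\<theta> / 8)" using Q2 by simp
    also have "\<dots> \<le> real N * (\<theta>/8)" using QMN thpos by (intro mult_right_mono) auto
    finally show ?thesis by simp
  qed
  have W: "S - 3 * real Q ^ 2 \<le> real N * \<theta> / 4"
  proof -
    have "S - (real P * real P + 2 * real P) \<le> real Q * real M * T1 - real P * real M' * T2"
      using K1 K2 B1 B2 by linarith
    moreover have "real P * real P + 2 * real P \<le> 3 * real Q ^ 2" using QP
      by (simp add: power2_eq_square algebra_simps)
    ultimately show ?thesis using V1 V2 by linarith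
  qed
  have Npos: "real N > 0" using \<open>Q < N\<close> by simp
  have X1: "S > real N * \<theta> / 2" using Sbig Npos unfolding S_def by (simp add: field_simps)
  have X2: "3 * real Q ^ 2 < real N * \<theta> / 4"
  proof -
    have "(3 * real Q ^ 2)^2 = 9 * real Q ^ 4" by (simp add: power_mult_distrib power_mult[symmetric])
    also have "\<dots> < 27 * real N" using QN by simp
    also have "\<dots> \<le> (real N * \<theta> / 4)^2"
    proof -
      have "432 \<le> real N * \<theta>^2" using Nbig thpos by (simp add: field_simps)
      hence "real N * 432 \<le> real N * (real N * \<theta>^2)" using Npos
        by (intro mult_left_mono) auto
      hence "27 * real N * 16 \<le> real N * (real N * \<theta>^2)" by simp
      have "(real N * \<theta> / 4)^2 = real N * (real N * \<theta>^2) / 16" by (simp add: power_mult_distrib power_divide power2_eq_square)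
      thus ?thesis using \<open>27 * real N * 16 \<le> _\<close> by simp
    qed
    finally have "(3 * real Q ^ 2)^2 < (real N * \<theta> / 4)^2" .
    moreover have "0 \<le> real N * \<theta> / 4" using Npos thpos by simp
    ultimately show ?thesis using power_less_imp_less_base by blast
  qed
  show False using W X1 X2 by linarith
qed

theorem mainTheorem8:
  fixes q :: "nat \<Rightarrow> nat" and a :: "nat \<Rightarrow> real" and N :: "nat \<Rightarrow> nat" and \<theta> :: real
  assumes q1: "2 \<le> q 1"
    and qinc: "\<forall>k\<ge>1. q k < q (k + 1)"
    and qgrow: "\<forall>k\<ge>1. q (k + 1) > (q k) ^ 4 + 3 * q k"
    and abound: "\<forall>n\<ge>1. \<bar>a n\<bar> \<le> 1"
    and Nmono: "strict_mono N"
    and Nlim: "(\<lambda>j. (\<Sum>n = 1..N j. \<bar>a n\<bar>) / real (N j)) \<longlonglongrightarrow> \<theta>"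
    and thpos: "\<theta> > 0"
  shows "\<forall>\<^sub>F j in sequentially. \<forall>m\<ge>1.
           real (q (m + 1)) / 3 \<le> real (N j) \<and> real (N j) < real (q (m + 2)) / 3 \<longrightarrow>
           (let Q = q m; M = N j div Q; M' = (Q * M) div (Q - 1) in
             (\<exists>c\<in>{0..Q - 1}. A a Q M c c \<ge> \<theta> / (8 * real Q)) \<or>
             (\<exists>d\<in>{0..Q - 2}. - A a (Q - 1) M' (d + 1) d \<ge> \<theta> / (8 * real Q)))"
proof -
  have E1: "\<forall>\<^sub>F j in sequentially. (\<Sum>n = 1..N j. \<bar>a n\<bar>) / real (N j) > \<theta> / 2"
    using Nlim thpos by (intro order_tendstoD(1)) auto
  obtain K :: nat where K: "real K \<ge> 432 / \<theta>^2" using real_arch_simple by blast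
  have E2: "\<forall>\<^sub>F j in sequentially. real (N j) \<ge> 432 / \<theta>^2"
  proof (rule eventually_sequentiallyI[of K])
    fix j assume "K \<le> j"
    moreover have "j \<le> N j" using Nmono by (rule seq_suble)
    ultimately show "real (N j) \<ge> 432 / \<theta>^2" using K by linarith
  qed
  show ?thesis
  proof (rule eventually_mono[OF eventually_conj[OF E1 E2]], intro allI impI)
    fix j m assume J: "(\<Sum>n = 1..N j. \<bar>a n\<bar>) / real (N j) > \<theta> / 2 \<and> real (N j) \<ge> 432 / \<theta>^2"
      and m1: "1 \<le> m"
      and R: "real (q (m + 1)) / 3 \<le> real (N j) \<and> real (N j) < real (q (m + 2)) / 3"
    have Q2: "2 \<le> q m" using qge2[OF q1 qinc m1] .
    have "q (m + 1) > (q m) ^ 4 + 3 * q m" using qgrow m1 by simp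
    hence "real (q (m+1)) > real (q m) ^ 4 + 3 * real (q m)"
      by (metis of_nat_add of_nat_less_iff of_nat_mult of_nat_numeral of_nat_power)
    hence QN: "real (q m) ^ 4 + 3 * real (q m) < 3 * real (N j)" using R by linarith
    show "let Q = q m; M = N j div Q; M' = (Q * M) div (Q - 1) in
             (\<exists>c\<in>{0..Q - 1}. A a Q M c c \<ge> \<theta> / (8 * real Q)) \<or>
             (\<exists>d\<in>{0..Q - 2}. - A a (Q - 1) M' (d + 1) d \<ge> \<theta> / (8 * real Q))"
      using core[OF Q2 QN abound thpos] J by (simp add: Let_def)
  qed
qed
end
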